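(* Let $G^1$ be a 1-wconnected 1-graph with infinitely many boundary 1-nodes such that ${}^{*}G^1$ has a hypernode not in its principal 1-galaxy $\Gamma_0^1$. Let $\Gamma_a^1,\Gamma_b^1,\Gamma_c^1$ be 1-galaxies different from $\Gamma_0^1$. If $\Gamma_a^1$ is closer to $\Gamma_0^1$ than is $\Gamma_b^1$, and $\Gamma_b^1$ is closer to $\Gamma_0^1$ than is $\Gamma_c^1$, then $\Gamma_a^1$ is closer to $\Gamma_0^1$ than is $\Gamma_c^1$. Thus the 1-galaxies are partially ordered according to their closeness to $\Gamma_0^1$.
   Context: 1-graphs. A 1-graph $G^1=\{X^0,B,X^1\}$ consists of a graph $G^0=\{X^0,B\}$ (0-nodes, with branches as two-element sets) and 1-nodes. The 1-nodes are obtained by partitioning the 0-tips of $G^0$ (classes of eventually identical one-ended paths) into subsets, some augmented by a single 0-node (each 0-node used at most once). Wdistance. The wdistance $d(x,y)$ is the minimum ordinal length of a two-ended 0-walk or 1-walk terminating at $x$ and $y$. A finite 0-walk has length equal to its number of branch traversals; each 0-tip traversal contributes $\omega$; 1-walk lengths are natural sums. Thus $d<\omega^2$. $\oplus$ denotes the natural sum of ordinals. 1-wconnected: any two nodes are joined by such a walk. A 0-section is the subgraph of $G^0$ induced by a maximal set of pairwise path-connected branches. A boundary 1-node is a 1-node incident to at least two 0-sections. Enlargement. Fix a free ultrafilter $\mathcal F$ on $\mathbb N$. Hypernodes are classes $[x_n]$ of sequences of 0-nodes or of 1-nodes, modulo agreement on a set in $\mathcal F$. A standard hypernode is the class of a constant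 sequence. 1-galaxies. Hypernodes $[x_n],[y_n]$ are 1-limitedly distant if $\{n:d(x_n,y_n)\le\omega\cdot k\}\in\mathcal F$ for some $k\in\mathbb N$. 1-galaxies are the equivalence classes of this relation together with the hyperbranches between their 0-hypernodes. The principal 1-galaxy $\Gamma_0^1$ contains the standard hypernodes. Closeness. For 1-galaxies $\Gamma_a^1,\Gamma_b^1\ne\Gamma_0^1$, $\Gamma^1_a$ is closer to $\Gamma_0^1$ than is $\Gamma_b^1$ if there exist $[y_n]\in\Gamma_a^1$, $[z_n]\in\Gamma_b^1$ and $[x_n]\in\Gamma_0^1$ with $\{n: d(z_n,x_n)\ge d(y_n,x_n)\oplus\omega\cdot m\}\in\mathcal F$ for every $m\in\mathbb N$. *)

theory Defs
  imports Main
begin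

text \<open>W a b represents the ordinal omega*a + b.  Addition is the natural
(Hessenberg) sum, which for ordinals below omega^2 is componentwise.\<close>

datatype w2 = W nat nat

instantiation w2 :: linorder
begin
definition less_eq_w2 :: "w2 \<Rightarrow> w2 \<Rightarrow> bool" where
  "less_eq_w2 x y = (case x of W a b \<Rightarrow> case y of W c d \<Rightarrow> a < c \<or> (a = c \<and> b \<le> d))"
definition less_w2 :: "w2 \<Rightarrow> w2 \<Rightarrow> bool" where
  "less_w2 x y = (x \<le> y \<and> \<not> y \<le> x)"
instance
proof
  fix x y z :: w2
  show "(x < y) = (x \<le> y \<and> \<not> y \<le> x)" by (simp add: less_w2_def)
  show "x \<le> x" by (cases x) (simp add: less_eq_w2_def)
  show "x \<le> y \<Longrightarrow> y \<le> z \<Longrightarrow> x \<le> z"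
    by (cases x; cases y; cases z) (auto simp: less_eq_w2_def)
  show "x \<le> y \<Longrightarrow> y \<le> x \<Longrightarrow> x = y"
    by (cases x; cases y) (auto simp: less_eq_w2_def)
  show "x \<le> y \<or> y \<le> x"
    by (cases x; cases y) (auto simp: less_eq_w2_def)
qed
end

instantiation w2 :: comm_monoid_add
begin
definition zero_w2 :: w2 where "zero_w2 = W 0 0"
definition plus_w2 :: "w2 \<Rightarrow> w2 \<Rightarrow> w2" where
  "plus_w2 x y = (case x of W a b \<Rightarrow> case y of W c d \<Rightarrow> W (a + c) (b + d))"
instance
proof
  fix x y z :: w2
  show "x + y + z = x + (y + z)" by (cases x; cases y; cases z) (simp add: plus_w2_def)
  show "x + y = y + x" by (cases x; cases y) (simp add: plus_w2_def)
  show "0 + x = x" by (cases x) (simp add: plus_w2_def zero_w2_def)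
qed
end

definition omega_times :: "nat \<Rightarrow> w2" where "omega_times m = W m 0"

type_synonym 'v tip = "(nat \<Rightarrow> 'v) set"
type_synonym 'v node1 = "'v tip set \<times> 'v option"

datatype 'v gnode = Node0 'v | Node1 "'v node1"

definition onepath :: "'v set set \<Rightarrow> (nat \<Rightarrow> 'v) \<Rightarrow> bool" where
  "onepath B p \<longleftrightarrow> inj p \<and> (\<forall>i. {p i, p (Suc i)} \<in> B)"

definition tipeq :: "(nat \<Rightarrow> 'v) \<Rightarrow> (nat \<Rightarrow> 'v) \<Rightarrow> bool" where
  "tipeq p q \<longleftrightarrow> (\<exists>i j. \<forall>k. p (i + k) = q (j + k))"

definition tip_of :: "'v set set \<Rightarrow> (nat \<Rightarrow> 'v) \<Rightarrow> 'v tip" where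
  "tip_of B p = {q. onepath B q \<and> tipeq p q}"

definition tips :: "'v set set \<Rightarrow> 'v tip set" where
  "tips B = {tip_of B p | p. onepath B p}"

text \<open>1-graph: branches are two-element sets of 0-nodes; the tip sets of the
1-nodes partition the 0-tips into nonempty classes; each 1-node may be
augmented by a single 0-node, each 0-node used at most once.\<close>
definition one_graph :: "'v set \<Rightarrow> 'v set set \<Rightarrow> 'v node1 set \<Rightarrow> bool" where
  "one_graph X0 B X1 \<longleftrightarrow>
     (\<forall>b\<in>B. \<exists>u v. u \<noteq> v \<and> b = {u, v} \<and> u \<in> X0 \<and> v \<in> X0) \<and>
     (\<forall>N\<in>X1. fst N \<noteq> {} \<and> fst N \<subseteq> tips B \<and>
        (\<forall>v. snd N = Some v \<longrightarrow> v \<in> X0)) \<and>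
     (\<forall>t\<in>tips B. \<exists>!N. N \<in> X1 \<and> t \<in> fst N) \<and>
     (\<forall>N\<in>X1. \<forall>N'\<in>X1. \<forall>v. snd N = Some v \<and> snd N' = Some v \<longrightarrow> N = N')"

definition gnodes :: "'v set \<Rightarrow> 'v node1 set \<Rightarrow> 'v gnode set" where
  "gnodes X0 X1 = Node0 ` X0 \<union> Node1 ` X1"

text \<open>A 0-walk segment (lo, hi, f): the nodes f i for i in the (possibly
unbounded) integer interval from lo to hi; None means unbounded (the walk
is one-ended/endless on that side and must eventually be a one-ended path,
i.e. it is extended and traverses the 0-tip of that path).\<close>
type_synonym 'v seg = "int option \<times> int option \<times> (int \<Rightarrow> 'v)"

definition in_rng :: "int option \<Rightarrow> int option \<Rightarrow> int \<Rightarrow> bool" where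
  "in_rng lo hi i \<longleftrightarrow> (case lo of None \<Rightarrow> True | Some a \<Rightarrow> a \<le> i) \<and>
                       (case hi of None \<Rightarrow> True | Some b \<Rightarrow> i \<le> b)"

definition is_seg :: "'v set \<Rightarrow> 'v set set \<Rightarrow> 'v seg \<Rightarrow> bool" where
  "is_seg X0 B s = (case s of (lo, hi, f) \<Rightarrow>
     (\<forall>a b. lo = Some a \<and> hi = Some b \<longrightarrow> a \<le> b) \<and>
     (\<forall>i. in_rng lo hi i \<longrightarrow> f i \<in> X0) \<and>
     (\<forall>i. in_rng lo hi i \<and> in_rng lo hi (i + 1) \<longrightarrow> {f i, f (i + 1)} \<in> B) \<and>
     (hi = None \<longrightarrow> (\<exists>m. in_rng lo hi m \<and> onepath B (\<lambda>k. f (m + int k)))) \<and>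
     (lo = None \<longrightarrow> (\<exists>m. in_rng lo hi m \<and> onepath B (\<lambda>k. f (m - int k)))))"

text \<open>The left / right end of a segment reaches node x: a finite end reaches
its 0-node and the 1-node embracing it; an infinite end reaches the 1-node
containing the 0-tip it traverses.\<close>
definition reachL :: "'v set set \<Rightarrow> 'v node1 set \<Rightarrow> 'v seg \<Rightarrow> 'v gnode \<Rightarrow> bool" where
  "reachL B X1 s x = (case s of (lo, hi, f) \<Rightarrow>
     (case lo of
        Some a \<Rightarrow> x = Node0 (f a) \<or> (\<exists>N\<in>X1. x = Node1 N \<and> snd N = Some (f a))
      | None \<Rightarrow> (\<exists>N\<in>X1. x = Node1 N \<and> (\<exists>m. in_rng lo hi m \<and>
                   onepath B (\<lambda>k. f (m - int k)) \<and> tip_of B (\<lambda>k. f (m - int k)) \<in> fst N))))"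

definition reachR :: "'v set set \<Rightarrow> 'v node1 set \<Rightarrow> 'v seg \<Rightarrow> 'v gnode \<Rightarrow> bool" where
  "reachR B X1 s x = (case s of (lo, hi, f) \<Rightarrow>
     (case hi of
        Some b \<Rightarrow> x = Node0 (f b) \<or> (\<exists>N\<in>X1. x = Node1 N \<and> snd N = Some (f b))
      | None \<Rightarrow> (\<exists>N\<in>X1. x = Node1 N \<and> (\<exists>m. in_rng lo hi m \<and>
                   onepath B (\<lambda>k. f (m + int k)) \<and> tip_of B (\<lambda>k. f (m + int k)) \<in> fst N))))"

text \<open>Length of a segment: finite two-ended: number of branch traversals;
one-ended: omega; endless: omega*2.\<close>
definition seg_len :: "'v seg \<Rightarrow> w2" where
  "seg_len s = (case s of (lo, hi, f) \<Rightarrow>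
     (case (lo, hi) of (Some a, Some b) \<Rightarrow> W 0 (nat (b - a))
       | _ \<Rightarrow> W ((if lo = None then 1 else 0) + (if hi = None then 1 else 0)) 0))"

text \<open>A two-ended 0-walk or 1-walk from x to y: a nonempty list of 0-walk
segments, consecutive ones meeting at 1-nodes (listed in js).\<close>
definition walk :: "'v set \<Rightarrow> 'v set set \<Rightarrow> 'v node1 set \<Rightarrow> 'v gnode \<Rightarrow> 'v gnode
                     \<Rightarrow> 'v seg list \<Rightarrow> 'v gnode list \<Rightarrow> bool" where
  "walk X0 B X1 x y segs js \<longleftrightarrow>
     segs \<noteq> [] \<and> length js = length segs - 1 \<and>
     (\<forall>s\<in>set segs. is_seg X0 B s) \<and>
     (\<forall>j\<in>set js. \<exists>N\<in>X1. j = Node1 N) \<and>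
     reachL B X1 (hd segs) x \<and> reachR B X1 (last segs) y \<and>
     (\<forall>i<length js. reachR B X1 (segs ! i) (js ! i) \<and> reachL B X1 (segs ! Suc i) (js ! i))"

definition walk_len :: "'v seg list \<Rightarrow> w2" where
  "walk_len segs = sum_list (map seg_len segs)"

definition wdist :: "'v set \<Rightarrow> 'v set set \<Rightarrow> 'v node1 set \<Rightarrow> 'v gnode \<Rightarrow> 'v gnode \<Rightarrow> w2" where
  "wdist X0 B X1 x y = (LEAST l. \<exists>segs js. walk X0 B X1 x y segs js \<and> l = walk_len segs)"

definition wconnected :: "'v set \<Rightarrow> 'v set set \<Rightarrow> 'v node1 set \<Rightarrow> bool" where
  "wconnected X0 B X1 \<longleftrightarrow>
     (\<forall>x\<in>gnodes X0 X1. \<forall>y\<in>gnodes X0 X1. \<exists>segs js. walk X0 B X1 x y segs js)"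

definition adj :: "'v set set \<Rightarrow> ('v \<times> 'v) set" where
  "adj B = {(u, w). {u, w} \<in> B}"

definition bconn :: "'v set set \<Rightarrow> 'v set \<Rightarrow> 'v set \<Rightarrow> bool" where
  "bconn B b b' \<longleftrightarrow> (\<exists>u\<in>b. \<exists>w\<in>b'. (u, w) \<in> (adj B)\<^sup>*)"

text \<open>0-sections, represented by their (maximal) branch sets\<close>
definition sections0 :: "'v set set \<Rightarrow> 'v set set set" where
  "sections0 B = {{b'\<in>B. bconn B b b'} | b. b \<in> B}"

definition incident1 :: "'v node1 \<Rightarrow> 'v set set \<Rightarrow> bool" where
  "incident1 N S \<longleftrightarrow> (\<exists>t\<in>fst N. \<exists>p\<in>t. \<forall>i. {p i, p (Suc i)} \<in> S) \<or>
                     (\<exists>v. snd N = Some v \<and> (\<exists>b\<in>S. v \<in> b))"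

definition boundary_nodes :: "'v set \<Rightarrow> 'v set set \<Rightarrow> 'v node1 set \<Rightarrow> 'v node1 set" where
  "boundary_nodes X0 B X1 = {N\<in>X1. \<exists>S1\<in>sections0 B. \<exists>S2\<in>sections0 B.
       S1 \<noteq> S2 \<and> incident1 N S1 \<and> incident1 N S2}"

definition free_ultrafilter :: "nat filter \<Rightarrow> bool" where
  "free_ultrafilter F \<longleftrightarrow> F \<noteq> bot \<and>
     (\<forall>P. eventually P F \<or> eventually (\<lambda>n. \<not> P n) F) \<and>
     (\<forall>n. eventually (\<lambda>k. k \<noteq> n) F)"

text \<open>Representatives of hypernodes: sequences of 0-nodes or of 1-nodes.
(A hypernode is the class of such a sequence modulo agreement on a set in F;
all notions below are invariant under this agreement.)\<close>
definition hypernode :: "'v set \<Rightarrow> 'v node1 set \<Rightarrow> (nat \<Rightarrow> 'v gnode) \<Rightarrow> bool" where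
  "hypernode X0 X1 x \<longleftrightarrow> (\<forall>n. \<exists>v\<in>X0. x n = Node0 v) \<or> (\<forall>n. \<exists>N\<in>X1. x n = Node1 N)"

definition ldist :: "'v set \<Rightarrow> 'v set set \<Rightarrow> 'v node1 set \<Rightarrow> nat filter
                      \<Rightarrow> (nat \<Rightarrow> 'v gnode) \<Rightarrow> (nat \<Rightarrow> 'v gnode) \<Rightarrow> bool" where
  "ldist X0 B X1 F x y \<longleftrightarrow>
     (\<exists>k::nat. eventually (\<lambda>n. wdist X0 B X1 (x n) (y n) \<le> omega_times k) F)"

definition galaxy1 :: "'v set \<Rightarrow> 'v set set \<Rightarrow> 'v node1 set \<Rightarrow> nat filter
                        \<Rightarrow> (nat \<Rightarrow> 'v gnode) set \<Rightarrow> bool" where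
  "galaxy1 X0 B X1 F \<Gamma> \<longleftrightarrow>
     (\<exists>x. hypernode X0 X1 x \<and> \<Gamma> = {y. hypernode X0 X1 y \<and> ldist X0 B X1 F x y})"

definition principal_galaxy :: "'v set \<Rightarrow> 'v set set \<Rightarrow> 'v node1 set \<Rightarrow> nat filter
                                 \<Rightarrow> (nat \<Rightarrow> 'v gnode) set" where
  "principal_galaxy X0 B X1 F =
     {y. hypernode X0 X1 y \<and> (\<exists>s\<in>gnodes X0 X1. ldist X0 B X1 F (\<lambda>_. s) y)}"

definition closer :: "'v set \<Rightarrow> 'v set set \<Rightarrow> 'v node1 set \<Rightarrow> nat filter
     \<Rightarrow> (nat \<Rightarrow> 'v gnode) set \<Rightarrow> (nat \<Rightarrow> 'v gnode) set \<Rightarrow> bool" where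
  "closer X0 B X1 F Ga Gb \<longleftrightarrow>
     (\<exists>y\<in>Ga. \<exists>z\<in>Gb. \<exists>x\<in>principal_galaxy X0 B X1 F.
        \<forall>m::nat. eventually (\<lambda>n. wdist X0 B X1 (z n) (x n) \<ge>
                                   wdist X0 B X1 (y n) (x n) + omega_times m) F)"

end

theory Submission
  imports Defs
begin

lemma w2_le_iff: "W a b \<le> W c d \<longleftrightarrow> a < c \<or> (a = c \<and> b \<le> d)"
  by (simp add: less_eq_w2_def)

lemma w2_plus: "W a b + W c d = W (a + c) (b + d)"
  by (simp add: plus_w2_def)

lemma w2_add_mono: "(a::w2) \<le> b \<Longrightarrow> c \<le> d \<Longrightarrow> a + c \<le> b + d"
  by (cases a; cases b; cases c; cases d) (auto simp: w2_le_iff w2_plus)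

lemma w2_cancel: "(a::w2) + c \<le> b + c \<Longrightarrow> a \<le> b"
  by (cases a; cases b; cases c) (auto simp: w2_le_iff w2_plus)

lemma w2_omega_add: "omega_times a + omega_times b = omega_times (a + b)"
  by (simp add: omega_times_def w2_plus)

lemma w2_le_omega: "(x::w2) \<le> omega_times (case x of W a b \<Rightarrow> Suc a)"
  by (cases x) (simp add: omega_times_def w2_le_iff)

instance w2 :: wellorder
proof
  fix P :: "w2 \<Rightarrow> bool" and a :: w2
  assume step: "\<And>x. (\<And>y. y < x \<Longrightarrow> P y) \<Longrightarrow> P x"
  define f where "f = (\<lambda>x. case x of W a b \<Rightarrow> (a, b))"
  have wf: "wf (inv_image (less_than <*lex*> less_than) f)" by auto
  have lt: "y < x \<Longrightarrow> (y, x) \<in> inv_image (less_than <*lex*> less_than) f" for x y :: w2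
    by (cases x; cases y) (auto simp: f_def less_w2_def w2_le_iff)
  show "P a"
    by (induct a rule: wf_induct[OF wf]) (metis step lt)
qed


fun chain :: "'v set \<Rightarrow> 'v set set \<Rightarrow> 'v node1 set \<Rightarrow> 'v gnode \<Rightarrow> 'v seg list \<Rightarrow> 'v gnode list \<Rightarrow> 'v gnode \<Rightarrow> bool" where
  "chain X0 B X1 x [] js y = False"
| "chain X0 B X1 x [s] js y = (js = [] \<and> is_seg X0 B s \<and> reachL B X1 s x \<and> reachR B X1 s y)"
| "chain X0 B X1 x (s # s' # ss) js y = (case js of [] \<Rightarrow> False | j # js' \<Rightarrow>
     is_seg X0 B s \<and> reachL B X1 s x \<and> reachR B X1 s j \<and> (\<exists>N\<in>X1. j = Node1 N) \<and>
     chain X0 B X1 j (s' # ss) js' y)"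

lemma walk_chain: "walk X0 B X1 x y segs js \<longleftrightarrow> chain X0 B X1 x segs js y"
proof (induction segs arbitrary: x js)
  case Nil
  then show ?case by (simp add: walk_def)
next
  case (Cons s ss)
  show ?case
  proof (cases ss)
    case Nil
    then show ?thesis by (auto simp: walk_def)
  next
    case (Cons s' ss')
    show ?thesis
    proof (cases js)
      case Nil
      then show ?thesis using Cons by (simp add: walk_def)
    next
      case (Cons j js')
      have "walk X0 B X1 j y ss js' = chain X0 B X1 j ss js' y" by (rule Cons.IH)
      then show ?thesis using \<open>ss = s' # ss'\<close> Cons
        by (auto simp: walk_def All_less_Suc2)
    qed
  qed
qed


lemma chain_nonempty: "chain X0 B X1 x ss js y \<Longrightarrow> ss \<noteq> []"
  by (cases ss) auto

lemma concat1:
  "chain X0 B X1 x ss js j \<Longrightarrow> (\<exists>N\<in>X1. j = Node1 N) \<Longrightarrow> chain X0 B X1 j ts ks y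
   \<Longrightarrow> chain X0 B X1 x (ss @ ts) (js @ j # ks) y"
proof (induction ss arbitrary: x js)
  case Nil
  then show ?case by simp
next
  case (Cons s ss)
  obtain t ts' where ts: "ts = t # ts'" using chain_nonempty[OF Cons.prems(3)] by (cases ts) auto
  show ?case
  proof (cases ss)
    case Nil
    then show ?thesis using Cons.prems ts by auto
  next
    case (Cons s' ss')
    then obtain j' js' where js: "js = j' # js'" using \<open>chain X0 B X1 x (s # ss) js j\<close>
      by (cases js) auto
    have "chain X0 B X1 j' ss js' j" using Cons.prems(1) js Cons by simp
    from Cons.IH[OF this Cons.prems(2,3)] show ?thesis
      using Cons.prems(1) js Cons by simp
  qed
qed

definition rseg :: "'v seg \<Rightarrow> 'v seg" where
  "rseg s = (case s of (lo, hi, f) \<Rightarrow> (map_option uminus hi, map_option uminus lo, \<lambda>i. f (- i)))"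

lemma in_rng_rev: "in_rng (map_option uminus hi) (map_option uminus lo) i = in_rng lo hi (- i)"
  by (cases lo; cases hi) (auto simp: in_rng_def)

lemma rseg_len: "seg_len (rseg s) = seg_len s"
  by (cases s) (auto simp: rseg_def seg_len_def split: option.splits)

lemma rseg_is_seg: "is_seg X0 B s \<Longrightarrow> is_seg X0 B (rseg s)"
proof -
  obtain lo hi f where s: "s = (lo, hi, f)" by (cases s) auto
  assume a: "is_seg X0 B s"
  have A: "\<forall>a b. lo = Some a \<and> hi = Some b \<longrightarrow> a \<le> b"
    and Bx: "\<forall>i. in_rng lo hi i \<longrightarrow> f i \<in> X0"
    and C: "\<forall>i. in_rng lo hi i \<and> in_rng lo hi (i + 1) \<longrightarrow> {f i, f (i + 1)} \<in> B"
    and D: "hi = None \<longrightarrow> (\<exists>m. in_rng lo hi m \<and> onepath B (\<lambda>k. f (m + int k)))"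
    and E: "lo = None \<longrightarrow> (\<exists>m. in_rng lo hi m \<and> onepath B (\<lambda>k. f (m - int k)))"
    using a s by (auto simp: is_seg_def)
  have 1: "\<forall>a b. map_option uminus hi = Some a \<and> map_option uminus lo = Some b \<longrightarrow> a \<le> b"
    using A by auto
  have 2: "\<forall>i. in_rng (map_option uminus hi) (map_option uminus lo) i \<longrightarrow> f (- i) \<in> X0"
    using Bx by (simp add: in_rng_rev)
  have 3: "\<forall>i. in_rng (map_option uminus hi) (map_option uminus lo) i \<and>
      in_rng (map_option uminus hi) (map_option uminus lo) (i + 1) \<longrightarrow> {f (- i), f (- (i + 1))} \<in> B"
  proof (intro allI impI)
    fix i assume "in_rng (map_option uminus hi) (map_option uminus lo) i \<and>
      in_rng (map_option uminus hi) (map_option uminus lo) (i + 1)"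
    then have "in_rng lo hi (- i - 1) \<and> in_rng lo hi (- i - 1 + 1)" by (simp add: in_rng_rev)
    then have "{f (- i - 1), f (- i - 1 + 1)} \<in> B" using C by blast
    then show "{f (- i), f (- (i + 1))} \<in> B" by (simp add: insert_commute)
  qed
  have 4: "map_option uminus lo = None \<longrightarrow> (\<exists>m. in_rng (map_option uminus hi) (map_option uminus lo) m \<and> onepath B (\<lambda>k. f (- (m + int k))))"
  proof
    assume "map_option uminus lo = None"
    then obtain m where "in_rng lo hi m" "onepath B (\<lambda>k. f (m - int k))" using E by auto
    moreover have "(\<lambda>k. f (- (- m + int k))) = (\<lambda>k. f (m - int k))" by auto
    ultimately show "\<exists>m. in_rng (map_option uminus hi) (map_option uminus lo) m \<and> onepath B (\<lambda>k. f (- (m + int k)))"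
      by (intro exI[of _ "- m"]) (simp add: in_rng_rev)
  qed
  have 5: "map_option uminus hi = None \<longrightarrow> (\<exists>m. in_rng (map_option uminus hi) (map_option uminus lo) m \<and> onepath B (\<lambda>k. f (- (m - int k))))"
  proof
    assume "map_option uminus hi = None"
    then obtain m where "in_rng lo hi m" "onepath B (\<lambda>k. f (m + int k))" using D by auto
    moreover have "(\<lambda>k. f (- (- m - int k))) = (\<lambda>k. f (m + int k))" by (auto simp: add.commute)
    ultimately show "\<exists>m. in_rng (map_option uminus hi) (map_option uminus lo) m \<and> onepath B (\<lambda>k. f (- (m - int k)))"
      by (intro exI[of _ "- m"]) (simp add: in_rng_rev)
  qed
  show ?thesis using 1 2 3 4 5 by (simp add: is_seg_def rseg_def s)
qed

lemma rseg_reachL: "reachL B X1 (rseg s) x = reachR B X1 s x"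
proof -
  obtain lo hi f where s: "s = (lo, hi, f)" by (cases s) auto
  show ?thesis
  proof (cases hi)
    case None
    have "(\<exists>m. in_rng (map_option uminus hi) (map_option uminus lo) m \<and> P (\<lambda>k. f (- (m - int k))))
        \<longleftrightarrow> (\<exists>m. in_rng lo hi m \<and> P (\<lambda>k. f (m + int k)))" for P
    proof
      assume "\<exists>m. in_rng (map_option uminus hi) (map_option uminus lo) m \<and> P (\<lambda>k. f (- (m - int k)))"
      then obtain m where "in_rng lo hi (- m)" "P (\<lambda>k. f (- (m - int k)))" by (auto simp: in_rng_rev)
      moreover have "(\<lambda>k. f (- (m - int k))) = (\<lambda>k. f (- m + int k))" by auto
      ultimately show "\<exists>m. in_rng lo hi m \<and> P (\<lambda>k. f (m + int k))" by auto
    next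
      assume "\<exists>m. in_rng lo hi m \<and> P (\<lambda>k. f (m + int k))"
      then obtain m where "in_rng lo hi m" "P (\<lambda>k. f (m + int k))" by auto
      moreover have "(\<lambda>k. f (- (- m - int k))) = (\<lambda>k. f (m + int k))" by (auto simp: add.commute)
      ultimately show "\<exists>m. in_rng (map_option uminus hi) (map_option uminus lo) m \<and> P (\<lambda>k. f (- (m - int k)))"
        by (intro exI[of _ "- m"]) (simp add: in_rng_rev)
    qed
    from this[of "\<lambda>g. onepath B g \<and> tip_of B g \<in> fst N" for N]
    show ?thesis using None unfolding reachL_def reachR_def rseg_def s
      by (simp only: prod.case option.case option.map) blast
  next
    case (Some b)
    then show ?thesis by (simp add: reachL_def reachR_def rseg_def s)
  qed
qed

lemma rseg_reachR: "reachR B X1 (rseg s) x = reachL B X1 s x"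
proof -
  obtain lo hi f where s: "s = (lo, hi, f)" by (cases s) auto
  show ?thesis
  proof (cases lo)
    case None
    have "(\<exists>m. in_rng (map_option uminus hi) (map_option uminus lo) m \<and> P (\<lambda>k. f (- (m + int k))))
        \<longleftrightarrow> (\<exists>m. in_rng lo hi m \<and> P (\<lambda>k. f (m - int k)))" for P
    proof
      assume "\<exists>m. in_rng (map_option uminus hi) (map_option uminus lo) m \<and> P (\<lambda>k. f (- (m + int k)))"
      then obtain m where "in_rng lo hi (- m)" "P (\<lambda>k. f (- (m + int k)))" by (auto simp: in_rng_rev)
      moreover have "(\<lambda>k. f (- (m + int k))) = (\<lambda>k. f (- m - int k))" by auto
      ultimately show "\<exists>m. in_rng lo hi m \<and> P (\<lambda>k. f (m - int k))" by auto
    next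
      assume "\<exists>m. in_rng lo hi m \<and> P (\<lambda>k. f (m - int k))"
      then obtain m where "in_rng lo hi m" "P (\<lambda>k. f (m - int k))" by auto
      moreover have "(\<lambda>k. f (- (- m + int k))) = (\<lambda>k. f (m - int k))" by auto
      ultimately show "\<exists>m. in_rng (map_option uminus hi) (map_option uminus lo) m \<and> P (\<lambda>k. f (- (m + int k)))"
        by (intro exI[of _ "- m"]) (simp add: in_rng_rev)
    qed
    from this[of "\<lambda>g. onepath B g \<and> tip_of B g \<in> fst N" for N]
    show ?thesis using None unfolding reachL_def reachR_def rseg_def s
      by (simp only: prod.case option.case option.map) blast
  next
    case (Some b)
    then show ?thesis by (simp add: reachL_def reachR_def rseg_def s)
  qed
qed

lemma chain_rev: "chain X0 B X1 x ss js y \<Longrightarrow> chain X0 B X1 y (rev (map rseg ss)) (rev js) x"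
proof (induction ss arbitrary: x js)
  case Nil
  then show ?case by simp
next
  case (Cons s ss)
  show ?case
  proof (cases ss)
    case Nil
    then show ?thesis using Cons.prems by (auto simp: rseg_reachL rseg_reachR rseg_is_seg)
  next
    case (Cons s' ss')
    then obtain j js' where js: "js = j # js'" using \<open>chain X0 B X1 x (s # ss) js y\<close>
      by (cases js) auto
    have c: "chain X0 B X1 j ss js' y" and j: "\<exists>N\<in>X1. j = Node1 N"
      and s: "is_seg X0 B s" "reachL B X1 s x" "reachR B X1 s j"
      using Cons.prems js Cons by auto
    have "chain X0 B X1 j [rseg s] [] x" using s by (simp add: rseg_reachL rseg_reachR rseg_is_seg)
    from concat1[OF Cons.IH[OF c] j this] show ?thesis using js by simp
  qed
qed


definition mseg :: "int option \<Rightarrow> int \<Rightarrow> (int \<Rightarrow> 'v) \<Rightarrow> int \<Rightarrow> int option \<Rightarrow> (int \<Rightarrow> 'v) \<Rightarrow> 'v seg" where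
  "mseg lo b f a hi g = (lo, map_option (\<lambda>c. c - a + b) hi, \<lambda>i. if i \<le> b then f i else g (i - b + a))"

lemma rng_lo:
  assumes "\<forall>c. hi = Some c \<longrightarrow> a \<le> c" "i \<le> b"
  shows "in_rng lo (map_option (\<lambda>c. c - a + b) hi) i \<longleftrightarrow> in_rng lo (Some b) i"
  using assms by (cases lo; cases hi) (auto simp: in_rng_def)

lemma rng_hi:
  assumes "\<forall>l. lo = Some l \<longrightarrow> l \<le> b" "b \<le> i"
  shows "in_rng lo (map_option (\<lambda>c. c - a + b) hi) i \<longleftrightarrow> in_rng (Some a) hi (i - b + a)"
  using assms by (cases lo; cases hi) (auto simp: in_rng_def)

lemma merge:
  assumes s: "is_seg X0 B (lo, Some b, f)" and t: "is_seg X0 B (Some a, hi, g)" and fg: "f b = g a"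
  shows "is_seg X0 B (mseg lo b f a hi g)"
    "reachL B X1 (lo, Some b, f) x \<Longrightarrow> reachL B X1 (mseg lo b f a hi g) x"
    "reachR B X1 (Some a, hi, g) x \<Longrightarrow> reachR B X1 (mseg lo b f a hi g) x"
    "seg_len (mseg lo b f a hi g) \<le> seg_len (lo, Some b, f) + seg_len (Some a, hi, g)"
proof -
  define h where "h = (\<lambda>i. if i \<le> b then f i else g (i - b + a))"
  define hi' where "hi' = map_option (\<lambda>c. c - a + b) hi"
  have m: "mseg lo b f a hi g = (lo, hi', h)" by (simp add: mseg_def h_def hi'_def)
  have lo_le: "\<forall>l. lo = Some l \<longrightarrow> l \<le> b" using s by (auto simp: is_seg_def)
  have a_le: "\<forall>c. hi = Some c \<longrightarrow> a \<le> c" using t by (auto simp: is_seg_def)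
  have sB: "\<forall>i. in_rng lo (Some b) i \<longrightarrow> f i \<in> X0"
    and sC: "\<forall>i. in_rng lo (Some b) i \<and> in_rng lo (Some b) (i + 1) \<longrightarrow> {f i, f (i + 1)} \<in> B"
    and sE: "lo = None \<longrightarrow> (\<exists>m. in_rng lo (Some b) m \<and> onepath B (\<lambda>k. f (m - int k)))"
    using s by (auto simp: is_seg_def)
  have tB: "\<forall>i. in_rng (Some a) hi i \<longrightarrow> g i \<in> X0"
    and tC: "\<forall>i. in_rng (Some a) hi i \<and> in_rng (Some a) hi (i + 1) \<longrightarrow> {g i, g (i + 1)} \<in> B"
    and tD: "hi = None \<longrightarrow> (\<exists>m. in_rng (Some a) hi m \<and> onepath B (\<lambda>k. g (m + int k)))"
    using t by (auto simp: is_seg_def)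
  have RL: "i \<le> b \<Longrightarrow> in_rng lo hi' i \<longleftrightarrow> in_rng lo (Some b) i" for i
    using rng_lo[OF a_le] hi'_def by simp
  have RH: "b \<le> i \<Longrightarrow> in_rng lo hi' i \<longleftrightarrow> in_rng (Some a) hi (i - b + a)" for i
    using rng_hi[OF lo_le] hi'_def by simp
  have hl: "i \<le> b \<Longrightarrow> h i = f i" for i by (simp add: h_def)
  have hh: "b \<le> i \<Longrightarrow> h i = g (i - b + a)" for i using fg by (simp add: h_def)
  have 1: "\<forall>x y. lo = Some x \<and> hi' = Some y \<longrightarrow> x \<le> y" using lo_le a_le hi'_def by fastforce
  have 2: "\<forall>i. in_rng lo hi' i \<longrightarrow> h i \<in> X0"
  proof (intro allI impI)
    fix i assume "in_rng lo hi' i"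
    then show "h i \<in> X0"
      using RL RH hl hh sB tB by (cases "i \<le> b") auto
  qed
  have 3: "\<forall>i. in_rng lo hi' i \<and> in_rng lo hi' (i + 1) \<longrightarrow> {h i, h (i + 1)} \<in> B"
  proof (intro allI impI)
    fix i assume r: "in_rng lo hi' i \<and> in_rng lo hi' (i + 1)"
    consider "i + 1 \<le> b" | "b \<le> i" by linarith
    then show "{h i, h (i + 1)} \<in> B"
    proof cases
      case 1
      then show ?thesis using r RL hl sC by auto
    next
      case 2
      then have "in_rng (Some a) hi (i - b + a)" "in_rng (Some a) hi (i - b + a + 1)"
        using r RH[of i] RH[of "i+1"] by (auto simp: algebra_simps)
      then have "{g (i - b + a), g (i - b + a + 1)} \<in> B" using tC by blast
      then show ?thesis using 2 hh[of i] hh[of "i+1"] by (simp add: algebra_simps)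
    qed
  qed
  have 4: "hi' = None \<longrightarrow> (\<exists>m. in_rng lo hi' m \<and> onepath B (\<lambda>k. h (m + int k)))"
  proof
    assume "hi' = None"
    then have "hi = None" by (simp add: hi'_def)
    then obtain m where m: "in_rng (Some a) hi m" "onepath B (\<lambda>k. g (m + int k))" using tD by auto
    have ma: "a \<le> m" using m(1) by (simp add: in_rng_def)
    have "(\<lambda>k. h (m - a + b + int k)) = (\<lambda>k. g (m + int k))"
      using hh ma by (auto simp: algebra_simps)
    moreover have "in_rng lo hi' (m - a + b)" using RH[of "m - a + b"] m(1) ma by simp
    ultimately show "\<exists>m. in_rng lo hi' m \<and> onepath B (\<lambda>k. h (m + int k))"
      using m(2) by (intro exI[of _ "m - a + b"]) simp
  qed
  have 5: "lo = None \<longrightarrow> (\<exists>m. in_rng lo hi' m \<and> onepath B (\<lambda>k. h (m - int k)))"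
  proof
    assume "lo = None"
    then obtain m where m: "in_rng lo (Some b) m" "onepath B (\<lambda>k. f (m - int k))" using sE by auto
    have mb: "m \<le> b" using m(1) by (simp add: in_rng_def)
    have "(\<lambda>k. h (m - int k)) = (\<lambda>k. f (m - int k))" using hl mb by auto
    moreover have "in_rng lo hi' m" using RL[of m] m(1) mb by simp
    ultimately show "\<exists>m. in_rng lo hi' m \<and> onepath B (\<lambda>k. h (m - int k))"
      using m(2) by auto
  qed
  show "is_seg X0 B (mseg lo b f a hi g)" using 1 2 3 4 5 m by (simp add: is_seg_def)
  show "reachL B X1 (lo, Some b, f) x \<Longrightarrow> reachL B X1 (mseg lo b f a hi g) x"
  proof (cases lo)
    case None
    assume r: "reachL B X1 (lo, Some b, f) x"
    then obtain N m where N: "N \<in> X1" "x = Node1 N" "in_rng lo (Some b) m"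
      "onepath B (\<lambda>k. f (m - int k))" "tip_of B (\<lambda>k. f (m - int k)) \<in> fst N"
      using None by (auto simp: reachL_def)
    have mb: "m \<le> b" using N(3) by (simp add: in_rng_def)
    have "(\<lambda>k. h (m - int k)) = (\<lambda>k. f (m - int k))" using hl mb by auto
    then show ?thesis using N None m RL[of m] mb by (auto simp: reachL_def)
  next
    case (Some l)
    assume "reachL B X1 (lo, Some b, f) x"
    then show ?thesis using Some hl lo_le m by (simp add: reachL_def)
  qed
  show "reachR B X1 (Some a, hi, g) x \<Longrightarrow> reachR B X1 (mseg lo b f a hi g) x"
  proof (cases hi)
    case None
    assume r: "reachR B X1 (Some a, hi, g) x"
    then obtain N m where N: "N \<in> X1" "x = Node1 N" "in_rng (Some a) hi m"
      "onepath B (\<lambda>k. g (m + int k))" "tip_of B (\<lambda>k. g (m + int k)) \<in> fst N"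
      using None by (auto simp: reachR_def)
    have ma: "a \<le> m" using N(3) by (simp add: in_rng_def)
    have "(\<lambda>k. h (m - a + b + int k)) = (\<lambda>k. g (m + int k))"
      using hh ma by (auto simp: algebra_simps)
    moreover have "in_rng lo hi' (m - a + b)" using RH[of "m - a + b"] N(3) ma by simp
    ultimately show ?thesis using N None m hi'_def
      by (auto simp: reachR_def intro!: bexI[of _ N] exI[of _ "m - a + b"])
  next
    case (Some c)
    assume "reachR B X1 (Some a, hi, g) x"
    moreover have "b \<le> c - a + b" using a_le Some by auto
    ultimately show ?thesis using Some hh m hi'_def by (simp add: reachR_def)
  qed
  show "seg_len (mseg lo b f a hi g) \<le> seg_len (lo, Some b, f) + seg_len (Some a, hi, g)"
    using lo_le a_le by (cases lo; cases hi) (auto simp: mseg_def seg_len_def w2_plus w2_le_iff)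
qed


lemma chain_head:
  "chain X0 B X1 y (t # ts) ks z \<Longrightarrow> is_seg X0 B t' \<Longrightarrow> reachL B X1 t' x
   \<Longrightarrow> (\<And>w. reachR B X1 t w \<Longrightarrow> reachR B X1 t' w) \<Longrightarrow> chain X0 B X1 x (t' # ts) ks z"
  by (cases ts) (auto split: list.splits)

lemma reachR_node0: "reachR B X1 s (Node0 v) \<Longrightarrow> \<exists>lo b f. s = (lo, Some b, f) \<and> f b = v"
  by (cases s) (auto simp: reachR_def split: option.splits)

lemma reachL_node0: "reachL B X1 s (Node0 v) \<Longrightarrow> \<exists>a hi g. s = (Some a, hi, g) \<and> g a = v"
  by (cases s) (auto simp: reachL_def split: option.splits)

lemma reachR_node1: "reachR B X1 s (Node1 N) \<Longrightarrow> N \<in> X1"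
  by (cases s) (auto simp: reachR_def split: option.splits)

lemma chain_end: "chain X0 B X1 x ss js y \<Longrightarrow> \<exists>s. reachR B X1 s y"
  by (induction X0 B X1 x ss js y rule: chain.induct) (auto split: list.splits)

lemma concat0:
  "chain X0 B X1 x ss js (Node0 v) \<Longrightarrow> chain X0 B X1 (Node0 v) ts ks z
   \<Longrightarrow> \<exists>ss' js'. chain X0 B X1 x ss' js' z \<and> walk_len ss' \<le> walk_len ss + walk_len ts"
proof (induction ss arbitrary: x js)
  case Nil
  then show ?case by simp
next
  case (Cons s ss)
  obtain t ts' where ts: "ts = t # ts'" using chain_nonempty[OF Cons.prems(2)] by (cases ts) auto
  show ?case
  proof (cases ss)
    case Nil
    then have s: "js = []" "is_seg X0 B s" "reachL B X1 s x" "reachR B X1 s (Node0 v)"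
      using Cons.prems by auto
    obtain lo b f where sf: "s = (lo, Some b, f)" "f b = v" using reachR_node0[OF s(4)] by blast
    have t: "is_seg X0 B t" "reachL B X1 t (Node0 v)" using Cons.prems(2) ts
      by (cases ts'; auto split: list.splits)+
    obtain a hi g where tg: "t = (Some a, hi, g)" "g a = v" using reachL_node0[OF t(2)] by blast
    note M = merge[OF s(2)[unfolded sf] t(1)[unfolded tg] trans[OF sf(2) tg(2)[symmetric]]]
    have "chain X0 B X1 x (mseg lo b f a hi g # ts') ks z"
      using chain_head[OF Cons.prems(2)[unfolded ts] M(1) M(2)[OF s(3)[unfolded sf]]] M(3) tg by auto
    moreover have "walk_len (mseg lo b f a hi g # ts') \<le> walk_len (s # ss) + walk_len ts"
      using w2_add_mono[OF M(4) order_refl, of "walk_len ts'"] Nil ts sf tg by (simp add: walk_len_def add.assoc)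
    ultimately show ?thesis by blast
  next
    case (Cons s' ss')
    then obtain j js' where js: "js = j # js'" using \<open>chain X0 B X1 x (s # ss) js (Node0 v)\<close>
      by (cases js) auto
    have c: "chain X0 B X1 j ss js' (Node0 v)" and j: "\<exists>N\<in>X1. j = Node1 N"
      and s: "is_seg X0 B s" "reachL B X1 s x" "reachR B X1 s j"
      using Cons.prems js Cons by auto
    obtain ss'' js'' where c2: "chain X0 B X1 j ss'' js'' z" "walk_len ss'' \<le> walk_len ss + walk_len ts"
      using Cons.IH[OF c Cons.prems(2)] by blast
    obtain u us where u: "ss'' = u # us" using chain_nonempty[OF c2(1)] by (cases ss'') auto
    have "chain X0 B X1 x (s # ss'') (j # js'') z"
      using c2(1) s j u by (cases us) auto
    moreover have "walk_len (s # ss'') \<le> walk_len (s # ss) + walk_len ts"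
      using c2(2) w2_add_mono[OF order_refl c2(2), of "seg_len s"] by (simp add: walk_len_def add.assoc)
    ultimately show ?thesis by blast
  qed
qed

lemma concat:
  "chain X0 B X1 x ss js y \<Longrightarrow> chain X0 B X1 y ts ks z
   \<Longrightarrow> \<exists>ss' js'. chain X0 B X1 x ss' js' z \<and> walk_len ss' \<le> walk_len ss + walk_len ts"
proof (cases y)
  case (Node0 v)
  assume c1: "chain X0 B X1 x ss js y" and c2: "chain X0 B X1 y ts ks z"
  show ?thesis using concat0[OF c1[unfolded Node0] c2[unfolded Node0]] .
next
  case (Node1 N)
  assume c1: "chain X0 B X1 x ss js y" and c2: "chain X0 B X1 y ts ks z"
  have "N \<in> X1" using chain_end[OF c1] Node1 reachR_node1 by blast
  then have "chain X0 B X1 x (ss @ ts) (js @ y # ks) z" using concat1[OF c1 _ c2] Node1 by blast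
  then show ?thesis by (intro exI[of _ "ss @ ts"] exI) (simp add: walk_len_def)
qed

lemma wdist_le: "chain X0 B X1 x ss js y \<Longrightarrow> wdist X0 B X1 x y \<le> walk_len ss"
  unfolding wdist_def by (rule Least_le) (auto simp: walk_chain)

lemma wdist_attained: "chain X0 B X1 x ss js y \<Longrightarrow>
   \<exists>ss' js'. chain X0 B X1 x ss' js' y \<and> wdist X0 B X1 x y = walk_len ss'"
  unfolding wdist_def by (rule LeastI2_ex) (auto simp: walk_chain)

lemma wdist_tri: "chain X0 B X1 x ss js y \<Longrightarrow> chain X0 B X1 y ts ks z \<Longrightarrow>
   wdist X0 B X1 x z \<le> wdist X0 B X1 x y + wdist X0 B X1 y z"
proof -
  assume a: "chain X0 B X1 x ss js y" "chain X0 B X1 y ts ks z"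
  obtain s1 j1 where 1: "chain X0 B X1 x s1 j1 y" "wdist X0 B X1 x y = walk_len s1"
    using wdist_attained[OF a(1)] by blast
  obtain s2 j2 where 2: "chain X0 B X1 y s2 j2 z" "wdist X0 B X1 y z = walk_len s2"
    using wdist_attained[OF a(2)] by blast
  obtain s3 j3 where 3: "chain X0 B X1 x s3 j3 z" "walk_len s3 \<le> walk_len s1 + walk_len s2"
    using concat[OF 1(1) 2(1)] by blast
  show ?thesis using wdist_le[OF 3(1)] 3(2) 1(2) 2(2) by simp
qed

lemma wdist_sym_le: "chain X0 B X1 x ss js y \<Longrightarrow> wdist X0 B X1 y x \<le> wdist X0 B X1 x y"
proof -
  assume a: "chain X0 B X1 x ss js y"
  obtain s1 j1 where 1: "chain X0 B X1 x s1 j1 y" "wdist X0 B X1 x y = walk_len s1"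
    using wdist_attained[OF a] by blast
  have "walk_len (rev (map rseg s1)) = walk_len s1"
    by (simp add: walk_len_def rev_map[symmetric] sum_list_rev o_def rseg_len)
  then show ?thesis using wdist_le[OF chain_rev[OF 1(1)]] 1(2) by simp
qed


lemma conn_chain: "wconnected X0 B X1 \<Longrightarrow> u \<in> gnodes X0 X1 \<Longrightarrow> v \<in> gnodes X0 X1
  \<Longrightarrow> \<exists>ss js. chain X0 B X1 u ss js v"
  by (auto simp: wconnected_def walk_chain)

lemma D_tri: "wconnected X0 B X1 \<Longrightarrow> u \<in> gnodes X0 X1 \<Longrightarrow> v \<in> gnodes X0 X1 \<Longrightarrow> w \<in> gnodes X0 X1
  \<Longrightarrow> wdist X0 B X1 u w \<le> wdist X0 B X1 u v + wdist X0 B X1 v w"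
  using conn_chain wdist_tri by metis

lemma D_sym: "wconnected X0 B X1 \<Longrightarrow> u \<in> gnodes X0 X1 \<Longrightarrow> v \<in> gnodes X0 X1
  \<Longrightarrow> wdist X0 B X1 u v = wdist X0 B X1 v u"
  using conn_chain wdist_sym_le by (metis order_antisym)

lemma hyp_gnodes: "hypernode X0 X1 x \<Longrightarrow> x n \<in> gnodes X0 X1"
  by (auto simp: hypernode_def gnodes_def)

theorem theorem11p3:
  fixes X0 :: "'v set" and B :: "'v set set" and X1 :: "'v node1 set"
    and F :: "nat filter" and Ga Gb Gc :: "(nat \<Rightarrow> 'v gnode) set"
  assumes "one_graph X0 B X1"
    and "wconnected X0 B X1"
    and "infinite (boundary_nodes X0 B X1)"
    and "free_ultrafilter F"
    and "\<exists>x. hypernode X0 X1 x \<and> x \<notin> principal_galaxy X0 B X1 F"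
    and "galaxy1 X0 B X1 F Ga" and "galaxy1 X0 B X1 F Gb" and "galaxy1 X0 B X1 F Gc"
    and "Ga \<noteq> principal_galaxy X0 B X1 F" and "Gb \<noteq> principal_galaxy X0 B X1 F"
    and "Gc \<noteq> principal_galaxy X0 B X1 F"
    and "closer X0 B X1 F Ga Gb" and "closer X0 B X1 F Gb Gc"
  shows "closer X0 B X1 F Ga Gc"
proof -
  let ?D = "wdist X0 B X1"
  let ?G = "gnodes X0 X1"
  note wc = assms(2)
  obtain y1 z1 x1 where y1: "y1 \<in> Ga" and z1: "z1 \<in> Gb" and x1: "x1 \<in> principal_galaxy X0 B X1 F"
    and c1: "\<forall>m::nat. eventually (\<lambda>n. ?D (z1 n) (x1 n) \<ge> ?D (y1 n) (x1 n) + omega_times m) F"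
    using assms(12) unfolding closer_def by blast
  obtain y2 z2 x2 where y2: "y2 \<in> Gb" and z2: "z2 \<in> Gc" and x2: "x2 \<in> principal_galaxy X0 B X1 F"
    and c2: "\<forall>m::nat. eventually (\<lambda>n. ?D (z2 n) (x2 n) \<ge> ?D (y2 n) (x2 n) + omega_times m) F"
    using assms(13) unfolding closer_def by blast
  obtain g where g: "hypernode X0 X1 g" "Gb = {y. hypernode X0 X1 y \<and> ldist X0 B X1 F g y}"
    using assms(7) unfolding galaxy1_def by blast
  obtain k1 where k1: "eventually (\<lambda>n. ?D (g n) (z1 n) \<le> omega_times k1) F"
    using z1 g by (auto simp: ldist_def)
  obtain k2 where k2: "eventually (\<lambda>n. ?D (g n) (y2 n) \<le> omega_times k2) F"
    using y2 g by (auto simp: ldist_def)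
  obtain s1 k3 where s1: "s1 \<in> ?G" and k3: "eventually (\<lambda>n. ?D s1 (x1 n) \<le> omega_times k3) F"
    using x1 by (auto simp: principal_galaxy_def ldist_def)
  obtain s2 k4 where s2: "s2 \<in> ?G" and k4: "eventually (\<lambda>n. ?D s2 (x2 n) \<le> omega_times k4) F"
    using x2 by (auto simp: principal_galaxy_def ldist_def)
  obtain k5 where k5: "?D s2 s1 \<le> omega_times k5" using w2_le_omega by blast
  have hy: "hypernode X0 X1 y1" "hypernode X0 X1 z1" "hypernode X0 X1 x1"
    "hypernode X0 X1 y2" "hypernode X0 X1 z2" "hypernode X0 X1 x2"
    using y1 z1 x1 y2 z2 x2 g assms(6,8) by (auto simp: galaxy1_def principal_galaxy_def)
  note G = hyp_gnodes[OF hy(1)] hyp_gnodes[OF hy(2)] hyp_gnodes[OF hy(3)]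
    hyp_gnodes[OF hy(4)] hyp_gnodes[OF hy(5)] hyp_gnodes[OF hy(6)] hyp_gnodes[OF g(1)]
  define K1 where "K1 = k1 + k2"
  define K2 where "K2 = k4 + k5 + k3"
  have "\<forall>m::nat. eventually (\<lambda>n. ?D (z2 n) (x1 n) \<ge> ?D (y1 n) (x1 n) + omega_times m) F"
  proof
    fix m :: nat
    have ev: "eventually (\<lambda>n. ?D (z1 n) (x1 n) \<ge> ?D (y1 n) (x1 n) + omega_times (m + K1 + K2 + K2)) F"
      using c1 by blast
    have ev2: "eventually (\<lambda>n. ?D (z2 n) (x2 n) \<ge> ?D (y2 n) (x2 n) + omega_times 0) F"
      using c2 by blast
    show "eventually (\<lambda>n. ?D (z2 n) (x1 n) \<ge> ?D (y1 n) (x1 n) + omega_times m) F"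
      using ev ev2 k1 k2 k3 k4
    proof eventually_elim
      case (elim n)
      have zy: "?D (z1 n) (y2 n) \<le> omega_times K1"
      proof -
        have "?D (z1 n) (y2 n) \<le> ?D (z1 n) (g n) + ?D (g n) (y2 n)" by (rule D_tri[OF wc G(2) G(7) G(4)])
        also have "\<dots> = ?D (g n) (z1 n) + ?D (g n) (y2 n)" using D_sym[OF wc G(2) G(7)] by simp
        also have "\<dots> \<le> omega_times k1 + omega_times k2" using elim(3,4) by (rule w2_add_mono)
        finally show ?thesis by (simp add: K1_def w2_omega_add)
      qed
      have xx: "?D (x2 n) (x1 n) \<le> omega_times K2"
      proof -
        have "?D (x2 n) (x1 n) \<le> ?D (x2 n) s2 + ?D s2 (x1 n)" by (rule D_tri[OF wc G(6) s2 G(3)])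
        also have "\<dots> \<le> ?D (x2 n) s2 + (?D s2 s1 + ?D s1 (x1 n))"
          using w2_add_mono[OF order_refl D_tri[OF wc s2 s1 G(3)]] by blast
        also have "\<dots> = ?D s2 (x2 n) + (?D s2 s1 + ?D s1 (x1 n))" using D_sym[OF wc G(6) s2] by simp
        also have "\<dots> \<le> omega_times k4 + (omega_times k5 + omega_times k3)"
          using elim(6) w2_add_mono[OF k5 elim(5)] by (rule w2_add_mono)
        finally show ?thesis by (simp add: K2_def w2_omega_add add.assoc)
      qed
      have xx': "?D (x1 n) (x2 n) \<le> omega_times K2" using xx D_sym[OF wc G(6) G(3)] by simp
      have "?D (y1 n) (x1 n) + (omega_times m + omega_times K1 + omega_times K2 + omega_times K2)
          \<le> ?D (z1 n) (x1 n)" using elim(1) by (simp add: w2_omega_add add.assoc)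
      also have "\<dots> \<le> ?D (z1 n) (y2 n) + (?D (y2 n) (x2 n) + ?D (x2 n) (x1 n))"
        using order_trans[OF D_tri[OF wc G(2) G(4) G(3)] w2_add_mono[OF order_refl D_tri[OF wc G(4) G(6) G(3)]]] .
      also have "\<dots> \<le> omega_times K1 + (?D (y2 n) (x2 n) + omega_times K2)"
        using w2_add_mono[OF zy w2_add_mono[OF order_refl xx]] .
      also have "\<dots> \<le> omega_times K1 + (?D (z2 n) (x2 n) + omega_times K2)"
      proof -
        have "?D (y2 n) (x2 n) \<le> ?D (z2 n) (x2 n)" using elim(2) by (simp add: omega_times_def zero_w2_def[symmetric])
        then show ?thesis by (intro w2_add_mono order_refl)
      qed
      also have "\<dots> \<le> omega_times K1 + ((?D (z2 n) (x1 n) + ?D (x1 n) (x2 n)) + omega_times K2)"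
        by (intro w2_add_mono order_refl D_tri[OF wc G(5) G(3) G(6)])
      also have "\<dots> \<le> omega_times K1 + ((?D (z2 n) (x1 n) + omega_times K2) + omega_times K2)"
        by (intro w2_add_mono order_refl xx')
      finally have "?D (y1 n) (x1 n) + omega_times m + (omega_times K1 + omega_times K2 + omega_times K2)
          \<le> ?D (z2 n) (x1 n) + (omega_times K1 + omega_times K2 + omega_times K2)"
        by (simp add: ac_simps)
      then show ?case by (rule w2_cancel)
    qed
  qed
  then show ?thesis unfolding closer_def using y1 z2 x1 by blast
qed

end
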